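(* Let $\mathbb{K}$ be a field, $C$ a coseparable coalgebra, and $P_e(B,C,\psi)$ an $e$-copointed $(P,C)_\psi$-extension with bijective entwining map $\psi$. If there exists a colifting of the translation map $\tilde\tau:C\to P\otimes P$, then the canonical map $\mathrm{can}:P\otimes_BP\to P\otimes C$ is bijective and $P^C_e(B)$ is a principal $C$-coalgebra Galois extension.
   Context: A coalgebra $C$ is coseparable if there is a $(C,C)$-bicolinear map $\delta:C\otimes C\to C$ with $\delta\circ\Delta=\mathrm{id}_C$. An entwining structure $(P,C)_\psi$: algebra $P$, coalgebra $C$, linear $\psi:C\otimes P\to P\otimes C$, $\psi(c\otimes p)=p_\alpha\otimes c^\alpha$, with $\psi(c\otimes pq)=p_\alpha q_\beta\otimes c^{\alpha\beta}$, $\psi(c\otimes1)=1\otimes c$, $p_\alpha\otimes c^\alpha{}_{(1)}\otimes c^\alpha{}_{(2)}=p_{\alpha\beta}\otimes c_{(1)}{}^\beta\otimes c_{(2)}{}^\alpha$, $p_\alpha\varepsilon(c^\alpha)=\varepsilon(c)p$. $P(B,C,\psi)$ (a $(P,C)_\psi$-extension) means $P$ has a right $C$-coaction $\rho^C(p)=p_{(0)}\otimes p_{(1)}$ with $\rho^C(pq)=p_{(0)}\psi(p_{(1)}\otimes q)$ and $B=P^{\mathrm{co}C}=\{b:\rho^C(bp)=b\rho^C(p)\ \forall p\}$; it is $e$-copointed, for a grouplike $e\in C$, if $\rho^C(p)=\psi(e\otimes p)$ for all $p$. The canonical map is $p\otimes_Bp'\mapsto pp'_{(0)}\otimes p'_{(1)}$;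 a colifting of the translation map is a linear $\tilde\tau:C\to P\otimes P$, $c\mapsto c^{\tilde{[1]}}\otimes c^{\tilde{[2]}}$, with $c^{\tilde{[1]}}c^{\tilde{[2]}}{}_{(0)}\otimes c^{\tilde{[2]}}{}_{(1)}=1_P\otimes c$. Writing $\psi^{-1}$ for the inverse, the left $C$-coaction induced by $\psi$ is ${}^{C_\psi}\rho(p)=\psi^{-1}(p\otimes e)$. A strong connection form is a linear $\ell:C\to P\otimes P$ with $\ell(e)=1\otimes1$, $\widetilde{\mathrm{can}}(\ell(c))=1\otimes c$ (where $\widetilde{\mathrm{can}}(p\otimes p')=pp'_{(0)}\otimes p'_{(1)}$), $(P\otimes\rho^C)\circ\ell=(\ell\otimes C)\circ\Delta$ and $({}^{C_\psi}\rho\otimes P)\circ\ell=(C\otimes\ell)\circ\Delta$. An $e$-copointed $C$-coalgebra Galois extension $P^C_e(B)$ (canonical map bijective) is principal if the canonical entwining $\psi_{\mathrm{can}}(c\otimes p)=\mathrm{can}(\mathrm{can}^{-1}(1\otimes c)p)$ is bijective and a strong connection form exists. *)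

theory Defs
  imports "HOL-Library.Poly_Mapping"
begin

text \<open>Convention: every K-vector space is modelled as the free vector space
  with basis a type 'a, i.e. the finitely supported functions 'a =>0 'k.
  Then V (x) W is ('a * 'b) =>0 'k.\<close>

type_synonym ('a, 'k) vec = "'a \<Rightarrow>\<^sub>0 'k"

definition sc :: "'k::field \<Rightarrow> ('a, 'k) vec \<Rightarrow> ('a, 'k) vec" where
  "sc c v = Poly_Mapping.map (\<lambda>x. c * x) v"

definition bas :: "'a \<Rightarrow> ('a, 'k::field) vec" where
  "bas i = Poly_Mapping.single i 1"

definition lext :: "('a \<Rightarrow> ('b, 'k::field) vec) \<Rightarrow> ('a, 'k) vec \<Rightarrow> ('b, 'k) vec" where
  "lext g v = (\<Sum>i\<in>Poly_Mapping.keys v. sc (Poly_Mapping.lookup v i) (g i))"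

definition tprod :: "('a, 'k::field) vec \<Rightarrow> ('b, 'k) vec \<Rightarrow> ('a \<times> 'b, 'k) vec" where
  "tprod u v = (\<Sum>(i,j)\<in>Poly_Mapping.keys u \<times> Poly_Mapping.keys v. Poly_Mapping.single (i,j) (Poly_Mapping.lookup u i * Poly_Mapping.lookup v j))"

definition tmap :: "(('a, 'k::field) vec \<Rightarrow> ('c, 'k) vec) \<Rightarrow> (('b, 'k) vec \<Rightarrow> ('d, 'k) vec)
    \<Rightarrow> ('a \<times> 'b, 'k) vec \<Rightarrow> ('c \<times> 'd, 'k) vec" where
  "tmap f g = lext (\<lambda>(i,j). tprod (f (bas i)) (g (bas j)))"

definition assocL :: "('a \<times> ('b \<times> 'c), 'k::field) vec \<Rightarrow> (('a \<times> 'b) \<times> 'c, 'k) vec" where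
  "assocL = lext (\<lambda>(i,(j,k)). bas ((i,j),k))"

definition assocR :: "(('a \<times> 'b) \<times> 'c, 'k::field) vec \<Rightarrow> ('a \<times> ('b \<times> 'c), 'k) vec" where
  "assocR = lext (\<lambda>((i,j),k). bas (i,(j,k)))"

definition lcontr :: "(('a, 'k::field) vec \<Rightarrow> 'k) \<Rightarrow> ('a \<times> 'b, 'k) vec \<Rightarrow> ('b, 'k) vec" where
  "lcontr f = lext (\<lambda>(i,j). sc (f (bas i)) (bas j))"

definition rcontr :: "(('b, 'k::field) vec \<Rightarrow> 'k) \<Rightarrow> ('a \<times> 'b, 'k) vec \<Rightarrow> ('a, 'k) vec" where
  "rcontr f = lext (\<lambda>(i,j). sc (f (bas j)) (bas i))"

definition linmap :: "(('a, 'k::field) vec \<Rightarrow> ('b, 'k) vec) \<Rightarrow> bool" where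
  "linmap f \<longleftrightarrow> (\<forall>u v. f (u + v) = f u + f v) \<and> (\<forall>c v. f (sc c v) = sc c (f v))"

definition linfun :: "(('a, 'k::field) vec \<Rightarrow> 'k) \<Rightarrow> bool" where
  "linfun f \<longleftrightarrow> (\<forall>u v. f (u + v) = f u + f v) \<and> (\<forall>c v. f (sc c v) = c * f v)"

definition algebra :: "(('p, 'k::field) vec \<Rightarrow> ('p, 'k) vec \<Rightarrow> ('p, 'k) vec) \<Rightarrow> ('p, 'k) vec \<Rightarrow> bool" where
  "algebra mul one \<longleftrightarrow> (\<forall>q. linmap (\<lambda>p. mul p q)) \<and> (\<forall>p. linmap (mul p))
     \<and> (\<forall>p q r. mul (mul p q) r = mul p (mul q r))
     \<and> (\<forall>p. mul one p = p \<and> mul p one = p)"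

definition mulmap :: "(('p, 'k::field) vec \<Rightarrow> ('p, 'k) vec \<Rightarrow> ('p, 'k) vec) \<Rightarrow> ('p \<times> 'p, 'k) vec \<Rightarrow> ('p, 'k) vec" where
  "mulmap mul = lext (\<lambda>(i,j). mul (bas i) (bas j))"

definition coalgebra :: "(('c, 'k::field) vec \<Rightarrow> ('c \<times> 'c, 'k) vec) \<Rightarrow> (('c, 'k) vec \<Rightarrow> 'k) \<Rightarrow> bool" where
  "coalgebra \<Delta> \<epsilon> \<longleftrightarrow> linmap \<Delta> \<and> linfun \<epsilon>
     \<and> (\<forall>c. assocL (tmap id \<Delta> (\<Delta> c)) = tmap \<Delta> id (\<Delta> c))
     \<and> (\<forall>c. lcontr \<epsilon> (\<Delta> c) = c) \<and> (\<forall>c. rcontr \<epsilon> (\<Delta> c) = c)"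

text \<open>Coseparable: a (C,C)-bicolinear delta : C (x) C -> C with delta o Delta = id.
  C (x) C carries the left coaction Delta (x) C and the right coaction C (x) Delta.\<close>
definition coseparable :: "(('c, 'k::field) vec \<Rightarrow> ('c \<times> 'c, 'k) vec) \<Rightarrow> (('c, 'k) vec \<Rightarrow> 'k) \<Rightarrow> bool" where
  "coseparable \<Delta> \<epsilon> \<longleftrightarrow> (\<exists>\<delta> :: ('c \<times> 'c, 'k) vec \<Rightarrow> ('c, 'k) vec. linmap \<delta>
     \<and> (\<forall>x. \<Delta> (\<delta> x) = tmap \<delta> id (assocL (tmap id \<Delta> x)))
     \<and> (\<forall>x. \<Delta> (\<delta> x) = tmap id \<delta> (assocR (tmap \<Delta> id x)))
     \<and> (\<forall>c. \<delta> (\<Delta> c) = c))"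

definition grouplike :: "(('c, 'k::field) vec \<Rightarrow> ('c \<times> 'c, 'k) vec) \<Rightarrow> (('c, 'k) vec \<Rightarrow> 'k) \<Rightarrow> ('c, 'k) vec \<Rightarrow> bool" where
  "grouplike \<Delta> \<epsilon> e \<longleftrightarrow> \<Delta> e = tprod e e \<and> \<epsilon> e = 1"

definition entwining :: "(('p, 'k::field) vec \<Rightarrow> ('p, 'k) vec \<Rightarrow> ('p, 'k) vec) \<Rightarrow> ('p, 'k) vec
    \<Rightarrow> (('c, 'k) vec \<Rightarrow> ('c \<times> 'c, 'k) vec) \<Rightarrow> (('c, 'k) vec \<Rightarrow> 'k)
    \<Rightarrow> (('c \<times> 'p, 'k) vec \<Rightarrow> ('p \<times> 'c, 'k) vec) \<Rightarrow> bool" where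
  "entwining mul one \<Delta> \<epsilon> \<psi> \<longleftrightarrow> linmap \<psi>
     \<and> (\<forall>c p q. \<psi> (tprod c (mul p q))
           = tmap (mulmap mul) id (assocL (tmap id \<psi> (assocR (tprod (\<psi> (tprod c p)) q)))))
     \<and> (\<forall>c. \<psi> (tprod c one) = tprod one c)
     \<and> (\<forall>c p. tmap id \<Delta> (\<psi> (tprod c p))
           = assocR (tmap \<psi> id (assocL (tmap id \<psi> (assocR (tprod (\<Delta> c) p))))))
     \<and> (\<forall>c p. rcontr \<epsilon> (\<psi> (tprod c p)) = sc (\<epsilon> c) p)"

definition right_comodule :: "(('c, 'k::field) vec \<Rightarrow> ('c \<times> 'c, 'k) vec) \<Rightarrow> (('c, 'k) vec \<Rightarrow> 'k)
    \<Rightarrow> (('p, 'k) vec \<Rightarrow> ('p \<times> 'c, 'k) vec) \<Rightarrow> bool" where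
  "right_comodule \<Delta> \<epsilon> \<rho> \<longleftrightarrow> linmap \<rho>
     \<and> (\<forall>p. tmap \<rho> id (\<rho> p) = assocL (tmap id \<Delta> (\<rho> p)))
     \<and> (\<forall>p. rcontr \<epsilon> (\<rho> p) = p)"

definition entw_extension :: "(('p, 'k::field) vec \<Rightarrow> ('p, 'k) vec \<Rightarrow> ('p, 'k) vec)
    \<Rightarrow> (('c, 'k) vec \<Rightarrow> ('c \<times> 'c, 'k) vec) \<Rightarrow> (('c, 'k) vec \<Rightarrow> 'k)
    \<Rightarrow> (('c \<times> 'p, 'k) vec \<Rightarrow> ('p \<times> 'c, 'k) vec) \<Rightarrow> (('p, 'k) vec \<Rightarrow> ('p \<times> 'c, 'k) vec) \<Rightarrow> bool" where
  "entw_extension mul \<Delta> \<epsilon> \<psi> \<rho> \<longleftrightarrow> right_comodule \<Delta> \<epsilon> \<rho>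
     \<and> (\<forall>p q. \<rho> (mul p q) = tmap (mulmap mul) id (assocL (tmap id \<psi> (assocR (tprod (\<rho> p) q)))))"

definition coinv :: "(('p, 'k::field) vec \<Rightarrow> ('p, 'k) vec \<Rightarrow> ('p, 'k) vec)
    \<Rightarrow> (('p, 'k) vec \<Rightarrow> ('p \<times> 'c, 'k) vec) \<Rightarrow> ('p, 'k) vec set" where
  "coinv mul \<rho> = {b. \<forall>p. \<rho> (mul b p) = tmap (mul b) id (\<rho> p)}"

definition copointed :: "(('c \<times> 'p, 'k::field) vec \<Rightarrow> ('p \<times> 'c, 'k) vec) \<Rightarrow> (('p, 'k) vec \<Rightarrow> ('p \<times> 'c, 'k) vec)
    \<Rightarrow> ('c, 'k) vec \<Rightarrow> bool" where
  "copointed \<psi> \<rho> e \<longleftrightarrow> (\<forall>p. \<rho> p = \<psi> (tprod e p))"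

definition cantilde :: "(('p, 'k::field) vec \<Rightarrow> ('p, 'k) vec \<Rightarrow> ('p, 'k) vec)
    \<Rightarrow> (('p, 'k) vec \<Rightarrow> ('p \<times> 'c, 'k) vec) \<Rightarrow> ('p \<times> 'p, 'k) vec \<Rightarrow> ('p \<times> 'c, 'k) vec" where
  "cantilde mul \<rho> w = tmap (mulmap mul) id (assocL (tmap id \<rho> w))"

definition colifting :: "(('p, 'k::field) vec \<Rightarrow> ('p, 'k) vec \<Rightarrow> ('p, 'k) vec) \<Rightarrow> ('p, 'k) vec
    \<Rightarrow> (('p, 'k) vec \<Rightarrow> ('p \<times> 'c, 'k) vec) \<Rightarrow> (('c, 'k) vec \<Rightarrow> ('p \<times> 'p, 'k) vec) \<Rightarrow> bool" where
  "colifting mul one \<rho> \<tau> \<longleftrightarrow> linmap \<tau> \<and> (\<forall>c. cantilde mul \<rho> (\<tau> c) = tprod one c)"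

definition subspace :: "('a, 'k::field) vec set \<Rightarrow> bool" where
  "subspace V \<longleftrightarrow> 0 \<in> V \<and> (\<forall>u\<in>V. \<forall>v\<in>V. u + v \<in> V) \<and> (\<forall>c. \<forall>v\<in>V. sc c v \<in> V)"

definition kspan :: "('a, 'k::field) vec set \<Rightarrow> ('a, 'k) vec set" where
  "kspan S = \<Inter>{V. subspace V \<and> S \<subseteq> V}"

text \<open>P (x)_B P = (P (x) P) / span{pb (x) q - p (x) bq}, realised as the set of cosets.\<close>
definition balanced :: "(('p, 'k::field) vec \<Rightarrow> ('p, 'k) vec \<Rightarrow> ('p, 'k) vec) \<Rightarrow> ('p, 'k) vec set
    \<Rightarrow> ('p \<times> 'p, 'k) vec set" where
  "balanced mul B = kspan {tprod (mul p b) q - tprod p (mul b q) | p q b. b \<in> B}"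

definition tensorB :: "(('p, 'k::field) vec \<Rightarrow> ('p, 'k) vec \<Rightarrow> ('p, 'k) vec) \<Rightarrow> ('p, 'k) vec set
    \<Rightarrow> ('p \<times> 'p, 'k) vec set set" where
  "tensorB mul B = range (\<lambda>x. (\<lambda>n. x + n) ` balanced mul B)"

definition canB :: "(('p, 'k::field) vec \<Rightarrow> ('p, 'k) vec \<Rightarrow> ('p, 'k) vec)
    \<Rightarrow> (('p, 'k) vec \<Rightarrow> ('p \<times> 'c, 'k) vec) \<Rightarrow> ('p \<times> 'p, 'k) vec set \<Rightarrow> ('p \<times> 'c, 'k) vec" where
  "canB mul \<rho> X = cantilde mul \<rho> (SOME x. x \<in> X)"

text \<open>Canonical entwining psi_can(c (x) p) = can(can^{-1}(1 (x) c) p), extended linearly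
  from basis tensors; the right P-action on P (x)_B P is computed on a representative.\<close>
definition psican :: "(('p, 'k::field) vec \<Rightarrow> ('p, 'k) vec \<Rightarrow> ('p, 'k) vec) \<Rightarrow> ('p, 'k) vec
    \<Rightarrow> (('p, 'k) vec \<Rightarrow> ('p \<times> 'c, 'k) vec) \<Rightarrow> ('c \<times> 'p, 'k) vec \<Rightarrow> ('p \<times> 'c, 'k) vec" where
  "psican mul one \<rho> = lext (\<lambda>(i,j). cantilde mul \<rho>
      (tmap id (\<lambda>q. mul q (bas j))
        (SOME x. x \<in> inv_into (tensorB mul (coinv mul \<rho>)) (canB mul \<rho>) (tprod one (bas i)))))"

text \<open>Strong connection form w.r.t. the entwining psi, left coaction p |-> psi^{-1}(p (x) e).\<close>
definition strong_connection :: "(('p, 'k::field) vec \<Rightarrow> ('p, 'k) vec \<Rightarrow> ('p, 'k) vec) \<Rightarrow> ('p, 'k) vec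
    \<Rightarrow> (('c, 'k) vec \<Rightarrow> ('c \<times> 'c, 'k) vec) \<Rightarrow> (('p, 'k) vec \<Rightarrow> ('p \<times> 'c, 'k) vec)
    \<Rightarrow> (('c \<times> 'p, 'k) vec \<Rightarrow> ('p \<times> 'c, 'k) vec) \<Rightarrow> ('c, 'k) vec
    \<Rightarrow> (('c, 'k) vec \<Rightarrow> ('p \<times> 'p, 'k) vec) \<Rightarrow> bool" where
  "strong_connection mul one \<Delta> \<rho> \<psi> e ell \<longleftrightarrow> linmap ell
     \<and> ell e = tprod one one
     \<and> (\<forall>c. cantilde mul \<rho> (ell c) = tprod one c)
     \<and> (\<forall>c. tmap id \<rho> (ell c) = assocR (tmap ell id (\<Delta> c)))
     \<and> (\<forall>c. tmap (\<lambda>p. inv \<psi> (tprod p e)) id (ell c) = assocL (tmap id ell (\<Delta> c)))"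

definition principal :: "(('p, 'k::field) vec \<Rightarrow> ('p, 'k) vec \<Rightarrow> ('p, 'k) vec) \<Rightarrow> ('p, 'k) vec
    \<Rightarrow> (('c, 'k) vec \<Rightarrow> ('c \<times> 'c, 'k) vec) \<Rightarrow> (('p, 'k) vec \<Rightarrow> ('p \<times> 'c, 'k) vec)
    \<Rightarrow> ('c, 'k) vec \<Rightarrow> bool" where
  "principal mul one \<Delta> \<rho> e \<longleftrightarrow>
     bij_betw (canB mul \<rho>) (tensorB mul (coinv mul \<rho>)) UNIV
     \<and> bij (psican mul one \<rho>)
     \<and> (\<exists>ell. strong_connection mul one \<Delta> \<rho> (psican mul one \<rho>) e ell)"

end

theory Submission
  imports Defs
begin

lemma lookup_sc [simp]: "Poly_Mapping.lookup (sc c v) i = c * Poly_Mapping.lookup v i"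
  by (simp add: sc_def map.rep_eq when_def)

lemma lookup_bas: "Poly_Mapping.lookup (bas i) j = (if i = j then 1 else 0)"
  by (simp add: bas_def lookup_single when_def)

lemma keys_bas [simp]: "Poly_Mapping.keys (bas i :: ('a,'k::field) vec) = {i}"
  by (simp add: bas_def)

lemma sc_add [simp]: "sc c (u + v) = sc c u + sc c v"
  by (rule poly_mapping_eqI) (simp add: lookup_add algebra_simps)
lemma sc_add_left: "sc (a + b) v = sc a v + sc b v"
  by (rule poly_mapping_eqI) (simp add: lookup_add algebra_simps)
lemma sc_sc [simp]: "sc a (sc b v) = sc (a * b) v"
  by (rule poly_mapping_eqI) (simp add: algebra_simps)
lemma sc_one [simp]: "sc 1 v = v"
  by (rule poly_mapping_eqI) simp
lemma sc_zero_left [simp]: "sc 0 v = 0"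
  by (rule poly_mapping_eqI) simp
lemma sc_zero_right [simp]: "sc c 0 = 0"
  by (rule poly_mapping_eqI) simp
lemma sc_minus: "sc c (u - v) = sc c u - sc c v"
  by (rule poly_mapping_eqI) (simp add: lookup_minus algebra_simps)
lemma sc_uminus: "sc (-1) v = - v"
  by (rule poly_mapping_eqI) simp
lemma sc_sum: "sc c (sum f S) = (\<Sum>i\<in>S. sc c (f i))"
  by (induct S rule: infinite_finite_induct) auto

lemma keys_sc_subset: "Poly_Mapping.keys (sc c v) \<subseteq> Poly_Mapping.keys v"
  by (auto simp: in_keys_iff)

lemma lext_superset:
  assumes "finite S" "Poly_Mapping.keys v \<subseteq> S"
  shows "lext g v = (\<Sum>i\<in>S. sc (Poly_Mapping.lookup v i) (g i))"
  unfolding lext_def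
proof (rule sum.mono_neutral_left[OF assms(1) assms(2)])
  show "\<forall>i\<in>S - Poly_Mapping.keys v. sc (Poly_Mapping.lookup v i) (g i) = 0"
    by (auto simp: in_keys_iff)
qed

lemma lext_add [simp]: "lext g (u + v) = lext g u + lext g v"
proof -
  let ?S = "Poly_Mapping.keys u \<union> Poly_Mapping.keys v"
  have f: "finite ?S" by simp
  have "Poly_Mapping.keys (u+v) \<subseteq> ?S" by (rule keys_add)
  then show ?thesis
    by (simp add: lext_superset[OF f] lext_superset[OF f, of u] lext_superset[OF f, of v]
        lookup_add sc_add_left sum.distrib)
qed

lemma lext_sc [simp]: "lext g (sc c v) = sc c (lext g v)"
proof -
  have "Poly_Mapping.keys (sc c v) \<subseteq> Poly_Mapping.keys v" by (rule keys_sc_subset)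
  then show ?thesis
    by (simp add: lext_superset[of "Poly_Mapping.keys v"] sc_sum)
qed

lemma lext_zero [simp]: "lext g 0 = 0"
  by (simp add: lext_def)

lemma lext_bas [simp]: "lext g (bas i) = g i"
  by (simp add: lext_def bas_def)

lemma linmap_lext [simp]: "linmap (lext g)"
  by (simp add: linmap_def)

lemma linmapD: assumes "linmap f" shows "f (u + v) = f u + f v" "f (sc c v) = sc c (f v)"
  using assms by (auto simp: linmap_def)

lemma linmap_zero: assumes "linmap f" shows "f 0 = 0"
  using linmapD(2)[OF assms, of 0 0] by simp

lemma linmap_sum: assumes "linmap f" shows "f (sum g S) = (\<Sum>i\<in>S. f (g i))"
  by (induct S rule: infinite_finite_induct) (auto simp: linmap_zero[OF assms] linmapD[OF assms])

lemma linmap_lext_comm: assumes "linmap F" shows "F (lext h v) = lext (\<lambda>j. F (h j)) v"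
  by (simp add: lext_def linmap_sum[OF assms] linmapD[OF assms])

lemma lext_bas_id [simp]: "lext bas v = v"
proof (rule poly_mapping_eqI)
  fix k
  have "Poly_Mapping.lookup (lext bas v) k = (\<Sum>x\<in>Poly_Mapping.keys v. if x = k then Poly_Mapping.lookup v x else 0)"
    unfolding lext_def lookup_sum lookup_sc lookup_bas by (intro sum.cong) auto
  then show "Poly_Mapping.lookup (lext bas v) k = Poly_Mapping.lookup v k"
    by (simp add: in_keys_iff)
qed

lemma linmap_expand: assumes "linmap F" shows "lext (\<lambda>i. F (bas i)) v = F v"
  using linmap_lext_comm[OF assms, of bas v] by simp

lemma lin_eq_bas:
  assumes "linmap F" "linmap G" "\<And>i. F (bas i) = G (bas i)"
  shows "F v = G v"
  using linmap_expand[OF assms(1), of v] linmap_expand[OF assms(2), of v] assms(3) by simp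

lemma lookup_tprod [simp]: "Poly_Mapping.lookup (tprod u v) (i,j) = Poly_Mapping.lookup u i * Poly_Mapping.lookup v j"
proof -
  have e: "Poly_Mapping.lookup (case x of (a,b) \<Rightarrow> Poly_Mapping.single (a,b) (Poly_Mapping.lookup u a * Poly_Mapping.lookup v b)) (i,j)
     = (if x = (i,j) then Poly_Mapping.lookup u i * Poly_Mapping.lookup v j else 0)" for x
    by (auto simp: lookup_single when_def split: prod.split)
  show ?thesis unfolding tprod_def lookup_sum e
    by (auto simp: in_keys_iff)
qed

lemma tprod_add1 [simp]: "tprod (u + u') v = tprod u v + tprod u' v"
  by (rule poly_mapping_eqI) (auto simp: lookup_add algebra_simps)
lemma tprod_add2 [simp]: "tprod u (v + v') = tprod u v + tprod u v'"
  by (rule poly_mapping_eqI) (auto simp: lookup_add algebra_simps)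
lemma tprod_sc1 [simp]: "tprod (sc c u) v = sc c (tprod u v)"
  by (rule poly_mapping_eqI) (auto simp: algebra_simps)
lemma tprod_sc2 [simp]: "tprod u (sc c v) = sc c (tprod u v)"
  by (rule poly_mapping_eqI) (auto simp: algebra_simps)
lemma tprod_zero1 [simp]: "tprod 0 v = 0"
  by (rule poly_mapping_eqI) auto
lemma tprod_zero2 [simp]: "tprod u 0 = 0"
  by (rule poly_mapping_eqI) auto
lemma tprod_bas: "tprod (bas i) (bas j) = bas (i,j)"
  by (rule poly_mapping_eqI) (auto simp: lookup_bas split: if_split_asm)
lemma bas_pair [simp]: "bas (i,j) = tprod (bas i) (bas j)"
  by (simp add: tprod_bas)

lemma linmap_tprod1 [simp]: "linmap (\<lambda>u. tprod u v)"
  by (simp add: linmap_def)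
lemma linmap_tprod2 [simp]: "linmap (tprod u)"
  by (simp add: linmap_def)

lemma lext_tprod_left [simp]: "lext (\<lambda>i. tprod (a i) w) u = tprod (lext a u) w"
  using linmap_lext_comm[OF linmap_tprod1[of w], of a u] by simp
lemma lext_tprod_right [simp]: "lext (\<lambda>i. tprod w (a i)) u = tprod w (lext a u)"
  using linmap_lext_comm[OF linmap_tprod2[of w], of a u] by simp

lemma lext_tprod: "lext g (tprod u v) = lext (\<lambda>i. lext (\<lambda>j. g (i,j)) v) u"
proof -
  have l1: "linmap (\<lambda>u. lext g (tprod u v))" by (simp add: linmap_def)
  have l2: "linmap (\<lambda>v. lext g (tprod (bas i) v))" for i by (simp add: linmap_def)
  have "lext g (tprod u v) = lext (\<lambda>i. lext g (tprod (bas i) v)) u"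
    using linmap_expand[OF l1] by simp
  also have "\<dots> = lext (\<lambda>i. lext (\<lambda>j. g (i,j)) v) u"
    using linmap_expand[OF l2, symmetric] by (simp del: bas_pair add: tprod_bas)
  finally show ?thesis .
qed

lemma tensor_induct [case_names tprod add sc]:
  fixes x :: "('a \<times> 'b, 'k::field) vec"
  assumes T: "\<And>u v. P (tprod u v)" and A: "\<And>x y. P x \<Longrightarrow> P y \<Longrightarrow> P (x + y)"
    and S: "\<And>c x. P x \<Longrightarrow> P (sc c x)"
  shows "P x"
proof -
  have "P (\<Sum>k\<in>F. sc (Poly_Mapping.lookup x k) (bas k))" if "finite F" for F
    using that
  proof induct
    case empty
    have "P (sc 0 (tprod 0 0))" by (rule S[OF T])
    then show ?case by simp
  next
    case (insert k F)
    obtain i j where k: "k = (i,j)" by force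
    show ?case using insert by (simp add: A S T k del: bas_pair) (metis A S T tprod_bas)
  qed
  then have "P (\<Sum>k\<in>Poly_Mapping.keys x. sc (Poly_Mapping.lookup x k) (bas k))" by simp
  then show ?thesis using lext_bas_id[of x] unfolding lext_def by simp
qed



declare lext_tprod [simp]

lemma tmap_tprod [simp]: "linmap f \<Longrightarrow> linmap g \<Longrightarrow> tmap f g (tprod u v) = tprod (f u) (g v)"
  by (simp add: tmap_def linmap_expand)

lemma tmap_add [simp]: "tmap f g (x + y) = tmap f g x + tmap f g y" by (simp add: tmap_def)
lemma tmap_sc [simp]: "tmap f g (sc c x) = sc c (tmap f g x)" by (simp add: tmap_def)
lemma tmap_zero [simp]: "tmap f g 0 = 0" by (simp add: tmap_def)
lemma linmap_tmap [simp]: "linmap (tmap f g)" by (simp add: tmap_def)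

lemma assocL_tprod [simp]: "assocL (tprod u (tprod v w)) = tprod (tprod u v) w"
  by (simp add: assocL_def)
lemma assocR_tprod [simp]: "assocR (tprod (tprod u v) w) = tprod u (tprod v w)"
  by (simp add: assocR_def)
lemma assocL_add [simp]: "assocL (x + y) = assocL x + assocL y" by (simp add: assocL_def)
lemma assocL_sc [simp]: "assocL (sc c x) = sc c (assocL x)" by (simp add: assocL_def)
lemma assocL_zero [simp]: "assocL 0 = 0" by (simp add: assocL_def)
lemma assocR_add [simp]: "assocR (x + y) = assocR x + assocR y" by (simp add: assocR_def)
lemma assocR_sc [simp]: "assocR (sc c x) = sc c (assocR x)" by (simp add: assocR_def)
lemma assocR_zero [simp]: "assocR 0 = 0" by (simp add: assocR_def)
lemma linmap_assocL [simp]: "linmap assocL" by (simp add: assocL_def)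
lemma linmap_assocR [simp]: "linmap assocR" by (simp add: assocR_def)

lemma linfunD: assumes "linfun f" shows "f (u + v) = f u + f v" "f (sc c v) = c * f v"
  using assms by (auto simp: linfun_def)
lemma linfun_zero: assumes "linfun f" shows "f 0 = 0"
  using linfunD(2)[OF assms, of 0 0] by simp

lemma linfun_expand: assumes "linfun f" shows "f v = (\<Sum>i\<in>Poly_Mapping.keys v. Poly_Mapping.lookup v i * f (bas i))"
proof -
  have "f (sum g S) = (\<Sum>i\<in>S. f (g i))" for g and S :: "'a set"
    by (induct S rule: infinite_finite_induct) (auto simp: linfun_zero[OF assms] linfunD[OF assms])
  then show ?thesis using lext_bas_id[of v] unfolding lext_def
    by (metis (no_types, lifting) assms linfunD(2) sum.cong)
qed

lemma sum_sc_left: "(\<Sum>i\<in>S. sc (b i) w) = sc (\<Sum>i\<in>S. b i) w"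
  by (induct S rule: infinite_finite_induct) (auto simp: sc_add_left)

lemma lext_sc_fun: "lext (\<lambda>i. sc (a i) w) u = sc (\<Sum>i\<in>Poly_Mapping.keys u. Poly_Mapping.lookup u i * a i) w"
  unfolding lext_def by (simp add: sum_sc_left)

lemma linmap_sc [simp]: "linmap (sc c)"
  by (simp add: linmap_def mult.commute)


lemma rcontr_tprod [simp]: "linfun f \<Longrightarrow> rcontr f (tprod u v) = sc (f v) u"
proof -
  assume f: "linfun f"
  have "rcontr f (tprod u v) = lext (\<lambda>i. sc (f v) (bas i)) u"
    by (simp add: rcontr_def lext_sc_fun linfun_expand[OF f, of v] mult.commute)
  also have "\<dots> = sc (f v) u"
    using linmap_expand[OF linmap_sc[of "f v"], of u] by simp
  finally show ?thesis .
qed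

lemma lcontr_tprod [simp]: "linfun f \<Longrightarrow> lcontr f (tprod u v) = sc (f u) v"
proof -
  assume f: "linfun f"
  have "lcontr f (tprod u v) = lext (\<lambda>i. sc (f (bas i)) v) u"
  proof -
    have "lext (\<lambda>j. sc (f (bas i)) (bas j)) v = sc (f (bas i)) v" for i
      using linmap_expand[OF linmap_sc[of "f (bas i)"], of v] by simp
    then show ?thesis by (simp add: lcontr_def)
  qed
  also have "\<dots> = sc (f u) v"
    by (simp add: lext_sc_fun linfun_expand[OF f, of u] mult.commute)
  finally show ?thesis .
qed

lemma rcontr_add [simp]: "rcontr f (x + y) = rcontr f x + rcontr f y" by (simp add: rcontr_def)
lemma rcontr_sc [simp]: "rcontr f (sc c x) = sc c (rcontr f x)" by (simp add: rcontr_def)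
lemma rcontr_zero [simp]: "rcontr f 0 = 0" by (simp add: rcontr_def)
lemma lcontr_add [simp]: "lcontr f (x + y) = lcontr f x + lcontr f y" by (simp add: lcontr_def)
lemma lcontr_sc [simp]: "lcontr f (sc c x) = sc c (lcontr f x)" by (simp add: lcontr_def)
lemma lcontr_zero [simp]: "lcontr f 0 = 0" by (simp add: lcontr_def)
lemma linmap_rcontr [simp]: "linmap (rcontr f)" by (simp add: rcontr_def)
lemma linmap_lcontr [simp]: "linmap (lcontr f)" by (simp add: lcontr_def)

lemma mulmap_add [simp]: "mulmap m (x + y) = mulmap m x + mulmap m y" by (simp add: mulmap_def)
lemma mulmap_sc [simp]: "mulmap m (sc c x) = sc c (mulmap m x)" by (simp add: mulmap_def)
lemma linmap_mulmap [simp]: "linmap (mulmap m)" by (simp add: mulmap_def)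

lemma mulmap_tprod: assumes "\<And>q. linmap (\<lambda>p. m p q)" "\<And>p. linmap (m p)"
  shows "mulmap m (tprod u v) = m u v"
proof -
  have "mulmap m (tprod u v) = lext (\<lambda>i. m (bas i) v) u"
    by (simp add: mulmap_def linmap_expand[OF assms(2)])
  also have "\<dots> = m u v" using linmap_expand[OF assms(1)] by simp
  finally show ?thesis .
qed

lemma assocLR [simp]: "assocL (assocR x) = x"
  by (induct x rule: tensor_induct) (auto intro: tensor_induct[of "\<lambda>y. assocL (assocR (tprod y v)) = tprod y v" for v])
lemma assocRL [simp]: "assocR (assocL x) = x"
  by (induct x rule: tensor_induct) (auto intro: tensor_induct[of "\<lambda>y. assocR (assocL (tprod u y)) = tprod u y" for u])

lemma linmap_id [simp]: "linmap id" "linmap (\<lambda>x. x)" by (auto simp: linmap_def)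

lemma tensor_ext:
  fixes F G :: "('a \<times> 'b, 'k::field) vec \<Rightarrow> _"
  assumes "linmap F" "linmap G" "\<And>u v. F (tprod u v) = G (tprod u v)"
  shows "F x = G x"
  by (induct x rule: tensor_induct) (auto simp: assms linmapD[OF assms(1)] linmapD[OF assms(2)])



locale ctx =
  fixes mul :: "('p, 'k::field) vec \<Rightarrow> ('p, 'k) vec \<Rightarrow> ('p, 'k) vec"
    and one :: "('p, 'k) vec"
    and \<Delta> :: "('c, 'k) vec \<Rightarrow> ('c \<times> 'c, 'k) vec"
    and \<epsilon> :: "('c, 'k) vec \<Rightarrow> 'k"
    and \<psi> :: "('c \<times> 'p, 'k) vec \<Rightarrow> ('p \<times> 'c, 'k) vec"
    and \<rho> :: "('p, 'k) vec \<Rightarrow> ('p \<times> 'c, 'k) vec"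
    and e :: "('c, 'k) vec"
    and \<tau> :: "('c, 'k) vec \<Rightarrow> ('p \<times> 'p, 'k) vec"
  assumes alg: "algebra mul one"
    and coalg: "coalgebra \<Delta> \<epsilon>"
    and cosep: "coseparable \<Delta> \<epsilon>"
    and entw: "entwining mul one \<Delta> \<epsilon> \<psi>"
    and ext: "entw_extension mul \<Delta> \<epsilon> \<psi> \<rho>"
    and grp: "grouplike \<Delta> \<epsilon> e"
    and copt: "copointed \<psi> \<rho> e"
    and bijpsi: "bij \<psi>"
    and colift: "colifting mul one \<rho> \<tau>"
begin

lemma lin_mul1 [simp]: "linmap (\<lambda>p. mul p q)" using alg by (simp add: algebra_def)
lemma lin_mul2 [simp]: "linmap (mul p)" using alg by (simp add: algebra_def)
lemma mul_assoc [simp]: "mul (mul p q) r = mul p (mul q r)" using alg by (simp add: algebra_def)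
lemma mul_one1 [simp]: "mul one p = p" using alg by (simp add: algebra_def)
lemma mul_one2 [simp]: "mul p one = p" using alg by (simp add: algebra_def)
lemma mul_add1 [simp]: "mul (p + p') q = mul p q + mul p' q" using linmapD[OF lin_mul1] by blast
lemma mul_add2 [simp]: "mul p (q + q') = mul p q + mul p q'" using linmapD[OF lin_mul2] by blast
lemma mul_sc1 [simp]: "mul (sc c p) q = sc c (mul p q)" using linmapD[OF lin_mul1] by blast
lemma mul_sc2 [simp]: "mul p (sc c q) = sc c (mul p q)" using linmapD[OF lin_mul2] by blast
lemma mulmap_tp [simp]: "mulmap mul (tprod u v) = mul u v" by (rule mulmap_tprod) simp_all

lemma lin_Delta [simp]: "linmap \<Delta>" using coalg by (simp add: coalgebra_def)
lemma lin_eps [simp]: "linfun \<epsilon>" using coalg by (simp add: coalgebra_def)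
lemma coassoc: "assocL (tmap id \<Delta> (\<Delta> c)) = tmap \<Delta> id (\<Delta> c)" using coalg by (simp add: coalgebra_def)
lemma counitL [simp]: "lcontr \<epsilon> (\<Delta> c) = c" using coalg by (simp add: coalgebra_def)
lemma counitR [simp]: "rcontr \<epsilon> (\<Delta> c) = c" using coalg by (simp add: coalgebra_def)
lemma Delta_add [simp]: "\<Delta> (x + y) = \<Delta> x + \<Delta> y" using linmapD[OF lin_Delta] by blast
lemma Delta_sc [simp]: "\<Delta> (sc c x) = sc c (\<Delta> x)" using linmapD[OF lin_Delta] by blast
lemma eps_add [simp]: "\<epsilon> (x + y) = \<epsilon> x + \<epsilon> y" using linfunD[OF lin_eps] by blast
lemma eps_sc [simp]: "\<epsilon> (sc c x) = c * \<epsilon> x" using linfunD[OF lin_eps] by blast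

lemma lin_psi [simp]: "linmap \<psi>" using entw by (simp add: entwining_def)
lemma psi_add [simp]: "\<psi> (x + y) = \<psi> x + \<psi> y" using linmapD[OF lin_psi] by blast
lemma psi_sc [simp]: "\<psi> (sc c x) = sc c (\<psi> x)" using linmapD[OF lin_psi] by blast
lemma psi_one [simp]: "\<psi> (tprod c one) = tprod one c" using entw by (simp add: entwining_def)

definition Ent :: "('p \<times> 'c, 'k) vec \<Rightarrow> ('p, 'k) vec \<Rightarrow> ('p \<times> 'c, 'k) vec" where
  "Ent r q = tmap (mulmap mul) id (assocL (tmap id \<psi> (assocR (tprod r q))))"

lemma Ent_add1 [simp]: "Ent (x + y) q = Ent x q + Ent y q" by (simp add: Ent_def)
lemma Ent_add2 [simp]: "Ent r (p + q) = Ent r p + Ent r q" by (simp add: Ent_def)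
lemma Ent_sc1 [simp]: "Ent (sc c x) q = sc c (Ent x q)" by (simp add: Ent_def)
lemma Ent_sc2 [simp]: "Ent r (sc c q) = sc c (Ent r q)" by (simp add: Ent_def)
lemma lin_Ent1 [simp]: "linmap (\<lambda>r. Ent r q)" by (simp add: linmap_def)
lemma lin_Ent2 [simp]: "linmap (Ent r)" by (simp add: linmap_def)

lemma mulL: "tmap (mulmap mul) id (assocL (tprod p x)) = tmap (mul p) id x"
  by (induct x rule: tensor_induct) simp_all

lemma Ent_tprod [simp]: "Ent (tprod a c) q = tmap (mul a) id (\<psi> (tprod c q))"
  by (simp add: Ent_def mulL)

lemma ent_mul: "\<psi> (tprod c (mul p q)) = Ent (\<psi> (tprod c p)) q"
  using entw by (simp add: entwining_def Ent_def)
lemma ent_Delta: "tmap id \<Delta> (\<psi> (tprod c p)) = assocR (tmap \<psi> id (assocL (tmap id \<psi> (assocR (tprod (\<Delta> c) p)))))"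
  using entw by (simp add: entwining_def)
lemma ent_eps: "rcontr \<epsilon> (\<psi> (tprod c p)) = sc (\<epsilon> c) p"
  using entw by (simp add: entwining_def)

lemma lin_rho [simp]: "linmap \<rho>" using ext by (simp add: entw_extension_def right_comodule_def)
lemma rho_add [simp]: "\<rho> (x + y) = \<rho> x + \<rho> y" using linmapD[OF lin_rho] by blast
lemma rho_sc [simp]: "\<rho> (sc c x) = sc c (\<rho> x)" using linmapD[OF lin_rho] by blast
lemma rho_coassoc: "tmap \<rho> id (\<rho> p) = assocL (tmap id \<Delta> (\<rho> p))"
  using ext by (simp add: entw_extension_def right_comodule_def)
lemma rho_counit [simp]: "rcontr \<epsilon> (\<rho> p) = p"
  using ext by (simp add: entw_extension_def right_comodule_def)
lemma rho_mul: "\<rho> (mul p q) = Ent (\<rho> p) q"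
  using ext by (simp add: entw_extension_def Ent_def)

lemma Delta_e [simp]: "\<Delta> e = tprod e e" using grp by (simp add: grouplike_def)
lemma eps_e [simp]: "\<epsilon> e = 1" using grp by (simp add: grouplike_def)
lemma rho_psi: "\<rho> p = \<psi> (tprod e p)" using copt by (simp add: copointed_def)

lemma lin_tau [simp]: "linmap \<tau>" using colift by (simp add: colifting_def)
lemma tau_can: "cantilde mul \<rho> (\<tau> c) = tprod one c" using colift by (simp add: colifting_def)

abbreviation canT where "canT \<equiv> cantilde mul \<rho>"

lemma canT_add [simp]: "canT (x + y) = canT x + canT y" by (simp add: cantilde_def)
lemma canT_sc [simp]: "canT (sc c x) = sc c (canT x)" by (simp add: cantilde_def)
lemma lin_canT [simp]: "linmap canT" by (simp add: linmap_def)
lemma canT_tprod [simp]: "canT (tprod p q) = tmap (mul p) id (\<rho> q)"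
  by (simp add: cantilde_def mulL)

lemma rho_one [simp]: "\<rho> one = tprod one e" by (simp add: rho_psi)

definition \<delta> :: "('c \<times> 'c, 'k) vec \<Rightarrow> ('c, 'k) vec" where
  "\<delta> = (SOME d. linmap d
     \<and> (\<forall>x. \<Delta> (d x) = tmap d id (assocL (tmap id \<Delta> x)))
     \<and> (\<forall>x. \<Delta> (d x) = tmap id d (assocR (tmap \<Delta> id x)))
     \<and> (\<forall>c. d (\<Delta> c) = c))"

lemma delta_props: "linmap \<delta> \<and> (\<forall>x. \<Delta> (\<delta> x) = tmap \<delta> id (assocL (tmap id \<Delta> x)))
     \<and> (\<forall>x. \<Delta> (\<delta> x) = tmap id \<delta> (assocR (tmap \<Delta> id x)))
     \<and> (\<forall>c. \<delta> (\<Delta> c) = c)"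
  unfolding \<delta>_def using cosep unfolding coseparable_def by (rule someI_ex)

lemma lin_delta [simp]: "linmap \<delta>" using delta_props by blast
lemma delta_Delta [simp]: "\<delta> (\<Delta> c) = c" using delta_props by blast
lemma delta_colinL: "\<Delta> (\<delta> x) = tmap \<delta> id (assocL (tmap id \<Delta> x))" using delta_props by blast
lemma delta_colinR: "\<Delta> (\<delta> x) = tmap id \<delta> (assocR (tmap \<Delta> id x))" using delta_props by blast
lemma delta_add [simp]: "\<delta> (x + y) = \<delta> x + \<delta> y" using linmapD[OF lin_delta] by blast
lemma delta_sc [simp]: "\<delta> (sc c x) = sc c (\<delta> x)" using linmapD[OF lin_delta] by blast

definition fd :: "('c \<times> 'c, 'k) vec \<Rightarrow> 'k" where "fd x = \<epsilon> (\<delta> x)"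
lemma lin_fd [simp]: "linfun fd" by (simp add: linfun_def fd_def)
lemma fd_add [simp]: "fd (x + y) = fd x + fd y" by (simp add: fd_def)
lemma fd_sc [simp]: "fd (sc c x) = c * fd x" by (simp add: fd_def)
lemma fd_Delta [simp]: "fd (\<Delta> c) = \<epsilon> c" by (simp add: fd_def)

lemma D1: "\<delta> x = lcontr fd (assocL (tmap id \<Delta> x))"
proof -
  have "lcontr \<epsilon> (tmap \<delta> id y) = lcontr fd y" for y :: "(('c \<times> 'c) \<times> 'c, 'k) vec"
    by (induct y rule: tensor_induct) (simp_all add: fd_def[symmetric])
  then show ?thesis using counitL[of "\<delta> x"] delta_colinL[of x] by simp
qed

lemma D2: "\<delta> x = rcontr fd (assocR (tmap \<Delta> id x))"
proof -
  have "rcontr \<epsilon> (tmap id \<delta> y) = rcontr fd y" for y :: "('c \<times> ('c \<times> 'c), 'k) vec"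
    by (induct y rule: tensor_induct) (simp_all add: fd_def[symmetric])
  then show ?thesis using counitR[of "\<delta> x"] delta_colinR[of x] by simp
qed

end


lemma id_lam [simp]: "(\<lambda>x. x) = id" by (simp add: id_def)

lemma linmap_minus: "linmap f \<Longrightarrow> f (x - y) = f x - f y"
proof -
  assume l: "linmap f"
  have "f (x - y) = f (x + sc (-1) y)" by (simp add: sc_uminus)
  also have "\<dots> = f x + sc (-1) (f y)" using linmapD[OF l] by simp
  finally show ?thesis by (simp add: sc_uminus)
qed

context ctx
begin

definition G :: "('p \<times> 'c, 'k) vec \<Rightarrow> ('p, 'k) vec" where
  "G z = rcontr fd (assocR (tmap \<rho> id z))"

lemma G_add [simp]: "G (x + y) = G x + G y" by (simp add: G_def)
lemma G_sc [simp]: "G (sc c x) = sc c (G x)" by (simp add: G_def)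
lemma lin_G [simp]: "linmap G" by (simp add: linmap_def)
lemma G_tprod: "G (tprod b d) = rcontr fd (assocR (tprod (\<rho> b) d))" by (simp add: G_def)

lemma aux3: "\<rho> (rcontr fd x) = rcontr fd (tmap \<rho> id x)"
  by (induct x rule: tensor_induct) simp_all
lemma aux4: "tmap \<rho> id (assocR (tprod y d)) = assocR (tprod (tmap \<rho> id y) d)"
  by (induct y rule: tensor_induct) simp_all
lemma aux1: "rcontr fd (assocR (tprod (assocL (tprod p w)) d)) = tprod p (rcontr fd (assocR (tprod w d)))"
  by (induct w rule: tensor_induct) simp_all
lemma aux2: "rcontr fd (assocR (tprod (assocL (tmap id \<Delta> y)) d)) = tmap id \<delta> (assocR (tprod y d))"
proof (induct y rule: tensor_induct)
  case (tprod u v)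
  show ?case by (simp add: aux1 D2[of "tprod v d"])
qed simp_all

lemma RG1: "\<rho> (G z) = tmap id \<delta> (assocR (tmap \<rho> id z))"
proof (induct z rule: tensor_induct)
  case (tprod u v)
  show ?case by (simp add: G_tprod aux3 aux4 rho_coassoc aux2)
qed simp_all

lemma lin_G' [simp]: "linmap (\<lambda>w. rcontr fd (assocR w))" by (simp add: linmap_def)

lemma aux5: "tmap G id (assocL (tprod b X)) = tmap (\<lambda>w. rcontr fd (assocR w)) id (assocL (tprod (\<rho> b) X))"
  by (induct X rule: tensor_induct) (simp_all add: G_tprod)
lemma aux6: "tmap (\<lambda>w. rcontr fd (assocR w)) id (assocL (tprod (tprod p c) X)) = tprod p (lcontr fd (assocL (tprod c X)))"
  by (induct X rule: tensor_induct) simp_all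
lemma aux7: "tmap (\<lambda>w. rcontr fd (assocR w)) id (assocL (tprod y (\<Delta> d))) = tmap id \<delta> (assocR (tprod y d))"
proof (induct y rule: tensor_induct)
  case (tprod u v)
  show ?case by (simp add: aux6 D1[of "tprod v d"])
qed simp_all

lemma RG2: "\<rho> (G z) = tmap G id (assocL (tmap id \<Delta> z))"
proof (induct z rule: tensor_induct)
  case (tprod u v)
  show ?case by (simp add: aux5 aux7 RG1)
qed simp_all

lemma e_nz: "e \<noteq> 0" using eps_e linfun_zero[OF lin_eps] by force

definition kk where "kk = (SOME k. k \<in> Poly_Mapping.keys e)"
lemma kk: "Poly_Mapping.lookup e kk \<noteq> 0"
proof -
  have "Poly_Mapping.keys e \<noteq> {}" using e_nz by auto
  then have "kk \<in> Poly_Mapping.keys e" unfolding kk_def by (meson ex_in_conv someI_ex)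
  then show ?thesis by (simp add: in_keys_iff)
qed

definition phi :: "('c, 'k) vec \<Rightarrow> 'k" where "phi v = Poly_Mapping.lookup v kk / Poly_Mapping.lookup e kk"
lemma phi_add [simp]: "phi (x + y) = phi x + phi y" by (simp add: phi_def lookup_add add_divide_distrib)
lemma phi_sc [simp]: "phi (sc c x) = c * phi x" by (simp add: phi_def)
lemma phi_e [simp]: "phi e = 1" using kk by (simp add: phi_def)

definition taun :: "('c, 'k) vec \<Rightarrow> ('p \<times> 'p, 'k) vec" where
  "taun c = \<tau> c + sc (phi c) (tprod one one - \<tau> e)"

lemma taun_add [simp]: "taun (x + y) = taun x + taun y"
  by (simp add: taun_def linmapD[OF lin_tau] sc_add_left)
lemma taun_sc [simp]: "taun (sc c x) = sc c (taun x)"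
  by (simp add: taun_def linmapD[OF lin_tau])
lemma lin_taun [simp]: "linmap taun" by (simp add: linmap_def)
lemma taun_e [simp]: "taun e = tprod one one" by (simp add: taun_def)
lemma taun_can [simp]: "canT (taun c) = tprod one c"
  by (simp add: taun_def tau_can linmap_minus[OF lin_canT])

definition ell1 :: "('c, 'k) vec \<Rightarrow> ('p \<times> 'p, 'k) vec" where
  "ell1 c = tmap id G (assocR (tmap taun id (\<Delta> c)))"

lemma ell1_add [simp]: "ell1 (x + y) = ell1 x + ell1 y" by (simp add: ell1_def)
lemma ell1_sc [simp]: "ell1 (sc c x) = sc c (ell1 x)" by (simp add: ell1_def)
lemma lin_ell1 [simp]: "linmap ell1" by (simp add: linmap_def)

lemma aux8: "tmap (mul a) id (tmap id \<delta> (assocR (tprod y d))) = tmap id \<delta> (assocR (tprod (tmap (mul a) id y) d))"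
  by (induct y rule: tensor_induct) simp_all
lemma aux9: "canT (tmap id G (assocR (tprod t d))) = tmap id \<delta> (assocR (tprod (canT t) d))"
proof (induct t rule: tensor_induct)
  case (tprod u v)
  show ?case by (simp add: RG1 aux8)
qed simp_all
lemma canG: "canT (tmap id G (assocR x)) = tmap id \<delta> (assocR (tmap canT id x))"
  by (induct x rule: tensor_induct) (simp_all add: aux9)
lemma aux10: "tmap canT id (tmap taun id w) = tmap (tprod one) id w"
  by (induct w rule: tensor_induct) simp_all
lemma aux11: "assocR (tmap (tprod one) id w) = tprod one w"
  by (induct w rule: tensor_induct) simp_all

lemma ell1_can: "canT (ell1 c) = tprod one c"
  by (simp add: ell1_def canG aux10 aux11)

lemma lin_L' [simp]: "linmap (\<lambda>z. tmap id G (assocR z))" by (simp add: linmap_def)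

lemma aux12: "tprod p (tmap G id (assocL (tprod q X))) = assocR (tmap (\<lambda>z. tmap id G (assocR z)) id (assocL (tprod (tprod p q) X)))"
  by (induct X rule: tensor_induct) simp_all
lemma aux13: "tmap id \<rho> (tmap id G (assocR (tprod t d))) = assocR (tmap (\<lambda>z. tmap id G (assocR z)) id (assocL (tprod t (\<Delta> d))))"
proof (induct t rule: tensor_induct)
  case (tprod u v)
  show ?case by (simp add: RG2 aux12)
qed simp_all
lemma aux14: "assocL (tprod (taun a) X) = tmap (tmap taun id) id (assocL (tprod a X))"
  by (induct X rule: tensor_induct) simp_all
lemma aux15: "tmap id \<rho> (tmap id G (assocR (tmap taun id w))) = assocR (tmap (\<lambda>z. tmap id G (assocR z)) id (tmap (tmap taun id) id (assocL (tmap id \<Delta> w))))"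
proof (induct w rule: tensor_induct)
  case (tprod u v)
  show ?case by (simp add: aux13 aux14)
qed simp_all
lemma aux16: "assocR (tmap (\<lambda>z. tmap id G (assocR z)) id (tmap (tmap taun id) id (tmap \<Delta> id x))) = assocR (tmap ell1 id x)"
  by (induct x rule: tensor_induct) (simp_all add: ell1_def[symmetric])

lemma ell1_right: "tmap id \<rho> (ell1 c) = assocR (tmap ell1 id (\<Delta> c))"
  unfolding ell1_def[of c] aux15 coassoc aux16 ..

end


context ctx
begin

lemma psi_inv [simp]: "\<psi> (inv \<psi> x) = x" using bijpsi by (simp add: bij_def surj_f_inv_f)
lemma inv_psi [simp]: "inv \<psi> (\<psi> x) = x" using bijpsi by (simp add: bij_def)
lemma psi_inj: "\<psi> x = \<psi> y \<Longrightarrow> x = y" using bijpsi by (simp add: bij_def inj_def)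

lemma invpsi_add [simp]: "inv \<psi> (x + y) = inv \<psi> x + inv \<psi> y"
  by (rule psi_inj) simp
lemma invpsi_sc [simp]: "inv \<psi> (sc c x) = sc c (inv \<psi> x)"
  by (rule psi_inj) simp
lemma lin_invpsi [simp]: "linmap (inv \<psi>)" by (simp add: linmap_def)
lemma invpsi_one [simp]: "inv \<psi> (tprod one c) = tprod c one"
  by (rule psi_inj) simp

definition Lam :: "('p, 'k) vec \<Rightarrow> ('c \<times> 'p, 'k) vec" where "Lam p = inv \<psi> (tprod p e)"
lemma Lam_add [simp]: "Lam (x + y) = Lam x + Lam y" by (simp add: Lam_def)
lemma Lam_sc [simp]: "Lam (sc c x) = sc c (Lam x)" by (simp add: Lam_def)
lemma lin_Lam [simp]: "linmap Lam" by (simp add: linmap_def)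
lemma psi_Lam [simp]: "\<psi> (Lam p) = tprod p e" by (simp add: Lam_def)
lemma Lam_one [simp]: "Lam one = tprod e one"
  by (rule psi_inj) simp

lemma tmap_invpsi_psi [simp]: "tmap (inv \<psi>) id (tmap \<psi> id x) = x"
  by (induct x rule: tensor_induct) simp_all
lemma tmap_id_invpsi_psi [simp]: "tmap id (inv \<psi>) (tmap id \<psi> x) = x"
  by (induct x rule: tensor_induct) simp_all

definition Phi where "Phi x = assocR (tmap \<psi> id (assocL (tmap id \<psi> (assocR x))))"
lemma Phi_inj: "Phi x = Phi y \<Longrightarrow> x = y"
proof -
  assume "Phi x = Phi y"
  then have "assocL (Phi x) = assocL (Phi y)" by simp
  then have "tmap (inv \<psi>) id (assocL (Phi x)) = tmap (inv \<psi>) id (assocL (Phi y))" by simp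
  then have "assocR (tmap (inv \<psi>) id (assocL (Phi x))) = assocR (tmap (inv \<psi>) id (assocL (Phi y)))" by simp
  then have "tmap id (inv \<psi>) (assocR (tmap (inv \<psi>) id (assocL (Phi x)))) = tmap id (inv \<psi>) (assocR (tmap (inv \<psi>) id (assocL (Phi y))))" by simp
  then have "assocL (tmap id (inv \<psi>) (assocR (tmap (inv \<psi>) id (assocL (Phi x))))) = assocL (tmap id (inv \<psi>) (assocR (tmap (inv \<psi>) id (assocL (Phi y)))))" by simp
  then show "x = y" by (simp add: Phi_def)
qed

lemma ent_Delta_gen: "tmap id \<Delta> (\<psi> s) = Phi (tmap \<Delta> id s)"
proof (induct s rule: tensor_induct)
  case (tprod u v)
  show ?case by (simp add: ent_Delta Phi_def)
qed (simp_all add: Phi_def)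

lemma lin_tpe [simp]: "linmap (\<lambda>q. tprod q e)" by simp
lemma auxL1: "tmap id \<psi> (tmap id Lam y) = tmap id (\<lambda>q. tprod q e) y"
  by (induct y rule: tensor_induct) simp_all
lemma auxL2: "assocL (tmap id (\<lambda>q. tprod q e) y) = tprod y e"
  by (induct y rule: tensor_induct) simp_all

lemma Lam_coassoc: "tmap \<Delta> id (Lam p) = assocL (tmap id Lam (Lam p))"
proof (rule Phi_inj)
  have "Phi (tmap \<Delta> id (Lam p)) = tmap id \<Delta> (\<psi> (Lam p))" by (rule ent_Delta_gen[symmetric])
  also have "\<dots> = tprod p (tprod e e)" by simp
  also have "\<dots> = Phi (assocL (tmap id Lam (Lam p)))"
    by (simp add: Phi_def auxL1 auxL2)
  finally show "Phi (tmap \<Delta> id (Lam p)) = Phi (assocL (tmap id Lam (Lam p)))" .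
qed

lemma Lam_coassoc': "tmap id Lam (Lam p) = assocR (tmap \<Delta> id (Lam p))"
  by (simp add: Lam_coassoc)

definition K :: "('c \<times> 'p, 'k) vec \<Rightarrow> ('p, 'k) vec" where
  "K w = lcontr fd (assocL (tmap id Lam w))"
lemma K_add [simp]: "K (x + y) = K x + K y" by (simp add: K_def)
lemma K_sc [simp]: "K (sc c x) = sc c (K x)" by (simp add: K_def)
lemma lin_K [simp]: "linmap K" by (simp add: linmap_def)
lemma K_tprod: "K (tprod d y) = lcontr fd (assocL (tprod d (Lam y)))" by (simp add: K_def)

definition ell :: "('c, 'k) vec \<Rightarrow> ('p \<times> 'p, 'k) vec" where
  "ell c = tmap K id (assocL (tmap id ell1 (\<Delta> c)))"
lemma ell_add [simp]: "ell (x + y) = ell x + ell y" by (simp add: ell_def)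
lemma ell_sc [simp]: "ell (sc c x) = sc c (ell x)" by (simp add: ell_def)
lemma lin_ell [simp]: "linmap ell" by (simp add: linmap_def)

lemma fd_ee [simp]: "fd (tprod e e) = 1" by (metis Delta_e fd_Delta eps_e)

lemma ell1_e [simp]: "ell1 e = tprod one one"
  by (simp add: ell1_def G_tprod)

lemma ell_e: "ell e = tprod one one"
  by (simp add: ell_def K_tprod)

end


context ctx
begin

lemma lin_fadd: "linmap f \<Longrightarrow> linmap g \<Longrightarrow> linmap (\<lambda>a. f a + g a)"
  by (simp add: linmap_def)
lemma lin_fsc: "linmap f \<Longrightarrow> linmap (\<lambda>a. sc c (f a))"
  by (simp add: linmap_def mult.commute)
lemma tmap_fadd [simp]: "linmap f \<Longrightarrow> linmap g \<Longrightarrow> tmap (\<lambda>a. f a + g a) id W = tmap f id W + tmap g id W"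
  by (induct W rule: tensor_induct) (simp_all add: lin_fadd)
lemma tmap_fsc [simp]: "linmap f \<Longrightarrow> tmap (\<lambda>a. sc c (f a)) id W = sc c (tmap f id W)"
  by (induct W rule: tensor_induct) (simp_all add: lin_fsc mult.commute)

lemma tmapEnt_add [simp]: "tmap (Ent (r1 + r2)) id W = tmap (Ent r1) id W + tmap (Ent r2) id W"
  by (induct W rule: tensor_induct) simp_all
lemma tmapEnt_sc [simp]: "tmap (Ent (sc c r)) id W = sc c (tmap (Ent r) id W)"
  by (induct W rule: tensor_induct) (simp_all add: mult.commute)
lemma tmapmul_add [simp]: "tmap (mul (a + b)) id W = tmap (mul a) id W + tmap (mul b) id W"
  by (induct W rule: tensor_induct) simp_all
lemma tmapmul_sc [simp]: "tmap (mul (sc c a)) id W = sc c (tmap (mul a) id W)"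
  by (induct W rule: tensor_induct) (simp_all add: mult.commute)

lemma stepA0: "tmap \<psi> id (assocL (tprod d (tmap (mul y) id W))) = tmap (Ent (\<psi> (tprod d y))) id W"
  by (induct W rule: tensor_induct) (simp_all add: ent_mul)
lemma stepA: "tmap \<psi> id (assocL (tmap id canT (assocR (tprod s z)))) = tmap (Ent (\<psi> s)) id (\<rho> z)"
proof (induct s rule: tensor_induct)
  case (tprod u v)
  show ?case by (simp add: stepA0)
qed simp_all
lemma lin_mr [simp]: "linmap (\<lambda>a. tmap (mul y) id (\<rho> a))" by (simp add: linmap_def)
lemma stepB0: "tmap (Ent (tprod y e)) id W = tmap (tmap (mul y) id) id (tmap \<rho> id W)"
  by (induct W rule: tensor_induct) (simp_all add: rho_psi[symmetric])
lemma stepB1: "tmap (tmap (mul y) id) id (assocL (tprod q X)) = assocL (tprod (mul y q) X)"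
  by (induct X rule: tensor_induct) simp_all
lemma stepB2: "tmap (tmap (mul y) id) id (assocL (tmap id \<Delta> W)) = assocL (tmap id \<Delta> (tmap (mul y) id W))"
  by (induct W rule: tensor_induct) (simp_all add: stepB1)

definition Q where "Q t = tmap id canT (assocR (tmap Lam id t))"
lemma Q_add [simp]: "Q (x + y) = Q x + Q y" by (simp add: Q_def)
lemma Q_sc [simp]: "Q (sc c x) = sc c (Q x)" by (simp add: Q_def)
lemma lin_Q [simp]: "linmap Q" by (simp add: linmap_def)

lemma QPsi: "tmap \<psi> id (assocL (Q t)) = assocL (tmap id \<Delta> (canT t))"
proof (induct t rule: tensor_induct)
  case (tprod u v)
  show ?case by (simp add: Q_def stepA stepB0 rho_coassoc stepB2)
qed simp_all

lemma QL0: "tmap (inv \<psi>) id (assocL (tprod one W)) = tmap (\<lambda>c. tprod c one) id W"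
  by (induct W rule: tensor_induct) simp_all

lemma QL: "Q (ell1 c) = assocR (tmap (\<lambda>c. tprod c one) id (\<Delta> c))"
proof -
  have "tmap (inv \<psi>) id (tmap \<psi> id (assocL (Q (ell1 c)))) = tmap (inv \<psi>) id (assocL (tmap id \<Delta> (canT (ell1 c))))"
    by (simp only: QPsi)
  then have "assocL (Q (ell1 c)) = tmap (\<lambda>c. tprod c one) id (\<Delta> c)"
    by (simp add: ell1_can QL0)
  then have "assocR (assocL (Q (ell1 c))) = assocR (tmap (\<lambda>c. tprod c one) id (\<Delta> c))" by simp
  then show ?thesis by simp
qed

lemma lin_mulK [simp]: "linmap (\<lambda>b. lcontr fd (assocL (tprod d b)))" by (simp add: linmap_def)

lemma canK0: "tmap (mul (lcontr fd (assocL (tprod d s)))) id (\<rho> z) = lcontr fd (assocL (tprod d (tmap id canT (assocR (tprod s z)))))"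
  by (induct s rule: tensor_induct) simp_all
lemma canK1: "canT (tmap K id (assocL (tprod d t))) = lcontr fd (assocL (tprod d (Q t)))"
proof (induct t rule: tensor_induct)
  case (tprod u v)
  show ?case by (simp add: K_tprod Q_def canK0)
qed simp_all
lemma canK: "canT (tmap K id (assocL w)) = lcontr fd (assocL (tmap id Q w))"
  by (induct w rule: tensor_induct) (simp_all add: canK1)

lemma lin_QL [simp]: "linmap (\<lambda>c'. assocR (tmap (\<lambda>c. tprod c one) id (\<Delta> c')))" by (simp add: linmap_def)
lemma canL1: "tmap id Q (tmap id ell1 w) = tmap id (\<lambda>c'. assocR (tmap (\<lambda>c. tprod c one) id (\<Delta> c'))) w"
  by (induct w rule: tensor_induct) (simp_all add: QL)
lemma canL2: "assocL (tprod x (assocR (tmap (\<lambda>c. tprod c one) id W))) = tmap id (tprod one) (assocL (tprod x W))"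
  by (induct W rule: tensor_induct) simp_all
lemma canL3: "assocL (tmap id (\<lambda>c'. assocR (tmap (\<lambda>c. tprod c one) id (\<Delta> c'))) w) = tmap id (tprod one) (assocL (tmap id \<Delta> w))"
  by (induct w rule: tensor_induct) (simp_all add: canL2)
lemma canL4: "lcontr fd (tmap id (tprod one) (tmap \<Delta> id W)) = tprod one (lcontr \<epsilon> W)"
  by (induct W rule: tensor_induct) simp_all

lemma ell_can: "canT (ell c) = tprod one c"
  by (simp add: ell_def canK canL1 canL3 coassoc canL4)

lemma lin_aRl [simp]: "linmap (\<lambda>w. assocR (tmap ell1 id w))" by (simp add: linmap_def)

lemma r1: "tmap id \<rho> (tmap K id y) = tmap K \<rho> y"
  by (induct y rule: tensor_induct) simp_all
lemma r2: "tmap K \<rho> (assocL (tprod a t)) = tmap K id (assocL (tprod a (tmap id \<rho> t)))"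
  by (induct t rule: tensor_induct) simp_all
lemma r3: "tmap K \<rho> (assocL (tmap id ell1 x)) = tmap K id (assocL (tmap id (\<lambda>w. assocR (tmap ell1 id w)) (tmap id \<Delta> x)))"
  by (induct x rule: tensor_induct) (simp_all add: r2 ell1_right)
lemma r4: "assocR (tprod (tmap K id (assocL (tprod a' t))) d) = tmap K id (assocL (tprod a' (assocR (tprod t d))))"
  by (induct t rule: tensor_induct) simp_all
lemma r5: "assocR (tprod (tmap K id (assocL (tmap id ell1 q))) d) = tmap K id (assocL (tmap id (\<lambda>w. assocR (tmap ell1 id w)) (assocR (tprod q d))))"
  by (induct q rule: tensor_induct) (simp_all add: r4)
lemma r6: "assocR (tmap ell id x) = tmap K id (assocL (tmap id (\<lambda>w. assocR (tmap ell1 id w)) (assocR (tmap \<Delta> id x))))"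
proof (induct x rule: tensor_induct)
  case (tprod u v)
  show ?case by (simp add: ell_def[of u] r5)
qed simp_all

lemma coassoc': "tmap id \<Delta> (\<Delta> c) = assocR (tmap \<Delta> id (\<Delta> c))"
  by (metis assocRL coassoc)

lemma ell_right: "tmap id \<rho> (ell c) = assocR (tmap ell id (\<Delta> c))"
  by (simp add: ell_def[of c] r1 r3 r6 coassoc')

lemma k1: "Lam (lcontr fd x) = lcontr fd (tmap id Lam x)"
  by (induct x rule: tensor_induct) simp_all
lemma k2: "tmap id Lam (assocL (tprod d s)) = assocL (tprod d (tmap id Lam s))"
  by (induct s rule: tensor_induct) simp_all
lemma k3: "lcontr fd (assocL (tprod d (assocR (tprod W q)))) = tprod (lcontr fd (assocL (tprod d W))) q"
  by (induct W rule: tensor_induct) simp_all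
lemma k4: "lcontr fd (assocL (tprod d (assocR (tmap \<Delta> id s)))) = tmap \<delta> id (assocL (tprod d s))"
proof (induct s rule: tensor_induct)
  case (tprod u v)
  show ?case by (simp add: k3 D1[of "tprod d u"])
qed simp_all
lemma k5: "tmap id K (assocR (tprod X y)) = tmap id (lcontr fd) (tmap id assocL (assocR (tprod X (Lam y))))"
  by (induct X rule: tensor_induct) (simp_all add: K_tprod)
lemma k6: "tmap id (lcontr fd) (tmap id assocL (assocR (tprod W (tprod c q)))) = tprod (rcontr fd (assocR (tprod W c))) q"
  by (induct W rule: tensor_induct) simp_all
lemma k7: "tmap id (lcontr fd) (tmap id assocL (assocR (tprod (\<Delta> d) s))) = tmap \<delta> id (assocL (tprod d s))"
proof (induct s rule: tensor_induct)
  case (tprod u v)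
  show ?case by (simp add: k6 D2[of "tprod d u"])
qed simp_all

lemma LamK: "Lam (K w) = tmap id K (assocR (tmap \<Delta> id w))"
proof (induct w rule: tensor_induct)
  case (tprod u v)
  show ?case by (simp add: K_tprod k1 k2 Lam_coassoc' k4 k5 k7)
qed simp_all

lemma lin_lk [simp]: "linmap (\<lambda>w. tmap id K (assocR (tmap \<Delta> id w)))" by (simp add: linmap_def)
lemma lin_lk2 [simp]: "linmap (\<lambda>w. tmap id K (assocR w))" by (simp add: linmap_def)

lemma l1: "tmap Lam id (tmap K id Y) = tmap (\<lambda>w. tmap id K (assocR (tmap \<Delta> id w))) id Y"
  by (induct Y rule: tensor_induct) (simp_all add: LamK)
lemma l2: "tmap (\<lambda>w. tmap id K (assocR (tmap \<Delta> id w))) id (assocL (tprod a t)) = tmap (\<lambda>w. tmap id K (assocR w)) id (assocL (tprod (\<Delta> a) t))"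
  by (induct t rule: tensor_induct) simp_all
lemma l3: "tmap (\<lambda>w. tmap id K (assocR (tmap \<Delta> id w))) id (assocL (tmap id ell1 x)) = tmap (\<lambda>w. tmap id K (assocR w)) id (assocL (tmap id ell1 (tmap \<Delta> id x)))"
  by (induct x rule: tensor_induct) (simp_all add: l2)
lemma l4: "assocL (tprod a (tmap K id (assocL (tprod b t)))) = tmap (\<lambda>w. tmap id K (assocR w)) id (assocL (tprod (tprod a b) t))"
  by (induct t rule: tensor_induct) simp_all
lemma l5: "assocL (tprod a (tmap K id (assocL (tmap id ell1 q)))) = tmap (\<lambda>w. tmap id K (assocR w)) id (assocL (tmap id ell1 (assocL (tprod a q))))"
  by (induct q rule: tensor_induct) (simp_all add: l4)
lemma l6: "assocL (tmap id ell v) = tmap (\<lambda>w. tmap id K (assocR w)) id (assocL (tmap id ell1 (assocL (tmap id \<Delta> v))))"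
proof (induct v rule: tensor_induct)
  case (tprod u v)
  show ?case by (simp add: ell_def[of v] l5)
qed simp_all

lemma ell_left: "tmap Lam id (ell c) = assocL (tmap id ell (\<Delta> c))"
  by (simp add: ell_def[of c] l1 l3 l6 coassoc)

end


lemma subspace_kspan: "subspace (kspan S)"
  by (auto simp: subspace_def kspan_def)
lemma kspan_sup: "S \<subseteq> kspan S"
  by (auto simp: kspan_def)
lemma kspan_least: "subspace V \<Longrightarrow> S \<subseteq> V \<Longrightarrow> kspan S \<subseteq> V"
  by (auto simp: kspan_def)

lemma subspace_sum: "subspace V \<Longrightarrow> (\<And>i. i \<in> J \<Longrightarrow> f i \<in> V) \<Longrightarrow> sum f J \<in> V"
  by (induct J rule: infinite_finite_induct) (auto simp: subspace_def)
lemma subspace_minus: "subspace V \<Longrightarrow> x \<in> V \<Longrightarrow> y \<in> V \<Longrightarrow> x - y \<in> V"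
proof -
  assume V: "subspace V" "x \<in> V" "y \<in> V"
  then have "x + sc (-1) y \<in> V" by (auto simp: subspace_def)
  then show ?thesis by (simp add: sc_uminus)
qed

definition col :: "'b \<Rightarrow> ('a \<times> 'b, 'k::field) vec \<Rightarrow> ('a, 'k) vec" where
  "col j t = rcontr (\<lambda>v. Poly_Mapping.lookup v j) t"

lemma linfun_lookup [simp]: "linfun (\<lambda>v. Poly_Mapping.lookup v j)"
  by (simp add: linfun_def lookup_add)

lemma lookup_col: "Poly_Mapping.lookup (col j t) i = Poly_Mapping.lookup t (i,j)"
proof -
  have "Poly_Mapping.lookup (col j t) i = (\<Sum>k\<in>Poly_Mapping.keys t. if k = (i,j) then Poly_Mapping.lookup t k else 0)"
    unfolding col_def rcontr_def lext_def lookup_sum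
    by (intro sum.cong) (auto simp: lookup_bas split: prod.splits)
  then show ?thesis by (simp add: in_keys_iff)
qed

lemma col_decomp:
  fixes t :: "('a \<times> 'b, 'k::field) vec"
  shows "t = (\<Sum>j\<in>snd ` Poly_Mapping.keys t. tprod (col j t) (bas j))"
proof (rule poly_mapping_eqI)
  fix k :: "'a \<times> 'b"
  obtain i j' where k: "k = (i,j')" by force
  have "Poly_Mapping.lookup (\<Sum>j\<in>snd ` Poly_Mapping.keys t. tprod (col j t) (bas j)) (i,j')
     = (\<Sum>j\<in>snd ` Poly_Mapping.keys t. if j = j' then Poly_Mapping.lookup t (i,j') else 0)"
    unfolding lookup_sum by (intro sum.cong) (auto simp: lookup_col lookup_bas simp del: bas_pair)
  also have "\<dots> = Poly_Mapping.lookup t (i,j')"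
  proof (cases "j' \<in> snd ` Poly_Mapping.keys t")
    case True then show ?thesis by simp
  next
    case False then have "(i,j') \<notin> Poly_Mapping.keys t" by force
    then show ?thesis using False by (simp add: in_keys_iff)
  qed
  finally show "Poly_Mapping.lookup t k = Poly_Mapping.lookup (\<Sum>j\<in>snd ` Poly_Mapping.keys t. tprod (col j t) (bas j)) k"
    by (simp add: k)
qed

lemma rcontr_comm: "linmap h \<Longrightarrow> linfun \<phi> \<Longrightarrow> h (rcontr \<phi> t) = rcontr \<phi> (tmap h id t)"
  by (induct t rule: tensor_induct) (simp_all add: linmapD)

lemma col_comm: "linmap h \<Longrightarrow> h (col j t) = col j (tmap h id t)"
  unfolding col_def by (rule rcontr_comm) simp_all

context ctx
begin

abbreviation "BB \<equiv> coinv mul \<rho>"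
abbreviation "NN \<equiv> balanced mul BB"
abbreviation "TT \<equiv> tensorB mul BB"

lemma lin_mm [simp]: "linmap (\<lambda>a. mul p (mul b a))" by (simp add: linmap_def)
lemma canT_zero [simp]: "canT 0 = 0" by (rule linmap_zero) simp

lemma comp_mul: "tmap (mul p) id (tmap (mul b) id W) = tmap (mul (mul p b)) id W"
  by (induct W rule: tensor_induct) simp_all

lemma canT_N: "n \<in> NN \<Longrightarrow> canT n = 0"
proof -
  assume n: "n \<in> NN"
  have "subspace {x. canT x = 0}" by (simp add: subspace_def)
  moreover have "{tprod (mul p b) q - tprod p (mul b q) | p q b. b \<in> BB} \<subseteq> {x. canT x = 0}"
    by (auto simp: coinv_def linmap_minus[OF lin_canT] comp_mul)
  ultimately show ?thesis using n kspan_least unfolding balanced_def by blast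
qed

lemma subN: "subspace NN" unfolding balanced_def by (rule subspace_kspan)

lemma TT_elem: "X \<in> TT \<Longrightarrow> \<exists>x. X = (\<lambda>n. x + n) ` NN"
  by (auto simp: tensorB_def)

lemma canB_coset: "canB mul \<rho> ((\<lambda>n. x + n) ` NN) = canT x"
proof -
  have "0 \<in> NN" using subN by (simp add: subspace_def)
  then have "x \<in> (\<lambda>n. x + n) ` NN" by force
  then have "(SOME y. y \<in> (\<lambda>n. x + n) ` NN) \<in> (\<lambda>n. x + n) ` NN" by (rule someI)
  then obtain n where "n \<in> NN" "(SOME y. y \<in> (\<lambda>n. x + n) ` NN) = x + n" by blast
  then show ?thesis by (simp add: canB_def canT_N)
qed

definition sig where "sig w = tmap (mulmap mul) id (assocL (tmap id ell w))"
lemma sig_add [simp]: "sig (x + y) = sig x + sig y" by (simp add: sig_def)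
lemma sig_sc [simp]: "sig (sc c x) = sc c (sig x)" by (simp add: sig_def)
lemma lin_sig [simp]: "linmap sig" by (simp add: linmap_def)
lemma sig_tprod [simp]: "sig (tprod a c) = tmap (mul a) id (ell c)" by (simp add: sig_def mulL)

lemma canT_left: "canT (tmap (mul p) id t) = tmap (mul p) id (canT t)"
  by (induct t rule: tensor_induct) (simp_all add: comp_mul)

lemma can_sig: "canT (sig w) = w"
  by (induct w rule: tensor_induct) (simp_all add: canT_left ell_can)

lemma sig_left: "sig (tmap (mul p) id w) = tmap (mul p) id (sig w)"
  by (induct w rule: tensor_induct) (simp_all add: comp_mul)

lemma rcontr_eps_can: "rcontr \<epsilon> (canT t) = mulmap mul t"
proof (induct t rule: tensor_induct)
  case (tprod u v)
  show ?case by (simp add: rcontr_comm[of "mul u", symmetric])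
qed simp_all

lemma mulmap_ell: "mulmap mul (ell c) = sc (\<epsilon> c) one"
  using rcontr_eps_can[of "ell c"] by (simp add: ell_can)

lemma mulmap_left: "mulmap mul (tmap (mul a) id t) = mul a (mulmap mul t)"
  by (induct t rule: tensor_induct) simp_all

lemma mulmap_sig: "mulmap mul (sig w) = rcontr \<epsilon> w"
  by (induct w rule: tensor_induct) (simp_all add: mulmap_left mulmap_ell)

definition LM where "LM Z = tmap (tmap (mulmap mul) id) id (tmap assocL id (assocL Z))"
lemma LM_add [simp]: "LM (x + y) = LM x + LM y" by (simp add: LM_def)
lemma LM_sc [simp]: "LM (sc c x) = sc c (LM x)" by (simp add: LM_def)
lemma LM_tprod0: "tmap (tmap (mulmap mul) id) id (tmap assocL id (assocL (tprod a (tprod Y v)))) = tprod (tmap (mul a) id Y) v"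
  by (induct Y rule: tensor_induct) (simp_all add: mulL)
lemma LM_tprod: "LM (tprod a X) = tmap (tmap (mul a) id) id X"
  by (induct X rule: tensor_induct) (simp_all add: LM_def mulL)

lemma lin_Entm [simp]: "linmap (\<lambda>u. Ent y (mul u r))" by (simp add: linmap_def)
lemma lin_psim [simp]: "linmap (\<lambda>u. \<psi> (tprod d (mul u r)))" by (simp add: linmap_def)
lemma lin_rhom [simp]: "linmap (\<lambda>u. \<rho> (mul u r))" by (simp add: linmap_def)
lemma lin_x1 [simp]: "linmap (\<lambda>u. tmap (mul a) id (\<psi> (tprod d (mul u r))))" by (simp add: linmap_def)
lemma lin_x2 [simp]: "linmap (\<lambda>u. Ent (\<rho> u) r)" by (simp add: linmap_def)
lemma lin_x3 [simp]: "linmap (\<lambda>u. Ent (\<psi> (tprod d u)) r)" by (simp add: linmap_def)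
lemma lin_mrr [simp]: "linmap (\<lambda>u. tmap (mul u) id (\<rho> r))" by (simp add: linmap_def)

definition Phi0 where "Phi0 r x = lext (\<lambda>(i,j). tmap (\<lambda>u. \<psi> (tprod (bas i) (mul u r))) id (ell (bas j))) x"
lemma Phi0_add [simp]: "Phi0 r (x + y) = Phi0 r x + Phi0 r y" by (simp add: Phi0_def)
lemma Phi0_sc [simp]: "Phi0 r (sc c x) = sc c (Phi0 r x)" by (simp add: Phi0_def)
lemma lin_Phi0 [simp]: "linmap (Phi0 r)" by (simp add: linmap_def)

lemma tmap_psim_add1: "tmap (\<lambda>u. \<psi> (tprod (d + d') (mul u r))) id W = tmap (\<lambda>u. \<psi> (tprod d (mul u r))) id W + tmap (\<lambda>u. \<psi> (tprod d' (mul u r))) id W"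
  by (induct W rule: tensor_induct) simp_all
lemma tmap_psim_sc1: "tmap (\<lambda>u. \<psi> (tprod (sc c d) (mul u r))) id W = sc c (tmap (\<lambda>u. \<psi> (tprod d (mul u r))) id W)"
  by (induct W rule: tensor_induct) (simp_all add: mult.commute)

lemma Phi0_tprod: "Phi0 r (tprod d c) = tmap (\<lambda>u. \<psi> (tprod d (mul u r))) id (ell c)"
proof -
  have l1: "linmap (\<lambda>d. tmap (\<lambda>u. \<psi> (tprod d (mul u r))) id W)" for W
    by (simp add: linmap_def tmap_psim_add1 tmap_psim_sc1)
  have l2: "linmap (\<lambda>c. tmap (\<lambda>u. \<psi> (tprod d (mul u r))) id (ell c))" for d
    by (simp add: linmap_def)
  show ?thesis unfolding Phi0_def
    by (simp add: linmap_expand[OF l2] linmap_expand[OF l1] del: bas_pair)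
qed

lemma EntEnt: "Ent (tmap (mul a) id Z) r = tmap (mul a) id (Ent Z r)"
  by (induct Z rule: tensor_induct) (simp_all add: comp_mul)

lemma k_a0: "tmap (\<lambda>u. Ent y (mul u r)) id (ell c) = LM (tmap id (Phi0 r) (assocR (tprod y c)))"
proof (induct y rule: tensor_induct)
  case (tprod a d)
  have "tmap (\<lambda>u. Ent (tprod a d) (mul u r)) id W = tmap (tmap (mul a) id) id (tmap (\<lambda>u. \<psi> (tprod d (mul u r))) id W)" for W
    by (induct W rule: tensor_induct) simp_all
  then show ?case by (simp add: LM_tprod Phi0_tprod)
qed simp_all

lemma EntEnt2: "Ent (Ent y u) r = Ent y (mul u r)"
  by (induct y rule: tensor_induct) (simp_all add: EntEnt ent_mul)

lemma k_a: "tmap (\<lambda>u. \<rho> (mul u r)) id (sig w) = LM (tmap id (Phi0 r) (assocR (tmap \<rho> id w)))"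
proof (induct w rule: tensor_induct)
  case (tprod a c)
  have h: "tmap (\<lambda>u. \<rho> (mul u r)) id (tmap (mul a) id W) = tmap (\<lambda>u. Ent (\<rho> a) (mul u r)) id W" for W
    by (induct W rule: tensor_induct) (simp_all add: rho_mul EntEnt2)
  have t: "tmap \<rho> id (tprod a c) = tprod (\<rho> a) c" by simp
  show ?case by (simp only: sig_tprod h k_a0 t)
qed simp_all

lemma k_b: "tmap (\<lambda>u. tmap (mul u) id (\<rho> r)) id (sig w) = LM (tmap id (\<lambda>c. tmap (\<lambda>u. tmap (mul u) id (\<rho> r)) id (ell c)) w)"
proof (induct w rule: tensor_induct)
  case (tprod a c)
  have "tmap (\<lambda>u. tmap (mul u) id (\<rho> r)) id (tmap (mul a) id W) = tmap (tmap (mul a) id) id (tmap (\<lambda>u. tmap (mul u) id (\<rho> r)) id W)" for W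
    by (induct W rule: tensor_induct) (simp_all add: comp_mul)
  moreover have "linmap (\<lambda>c. tmap (\<lambda>u. tmap (mul u) id (\<rho> r)) id (ell c))" by (simp add: linmap_def)
  ultimately show ?case by (simp add: LM_tprod)
qed simp_all

lemma kl1: "Phi0 r x = tmap (\<lambda>y. Ent y r) id (tmap \<psi> id (assocL (tmap id ell x)))"
proof (induct x rule: tensor_induct)
  case (tprod d c)
  have "tmap (\<lambda>u. \<psi> (tprod d (mul u r))) id t = tmap (\<lambda>y. Ent y r) id (tmap \<psi> id (assocL (tprod d t)))" for t
    by (induct t rule: tensor_induct) (simp_all add: ent_mul)
  then show ?case by (simp add: Phi0_tprod)
qed simp_all

lemma kl2: "tmap (\<lambda>y. Ent y r) id (tmap \<psi> id (tmap Lam id t)) = tmap (\<lambda>u. tmap (mul u) id (\<rho> r)) id t"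
  by (induct t rule: tensor_induct) (simp_all add: rho_psi[symmetric])

lemma KL: "Phi0 r (\<Delta> c) = tmap (\<lambda>u. tmap (mul u) id (\<rho> r)) id (ell c)"
  by (simp add: kl1 ell_left[symmetric] kl2)

lemma KL2: "tmap id (Phi0 r) (tmap id \<Delta> W) = tmap id (\<lambda>c. tmap (\<lambda>u. tmap (mul u) id (\<rho> r)) id (ell c)) W"
proof -
  have "linmap (\<lambda>c. tmap (\<lambda>u. tmap (mul u) id (\<rho> r)) id (ell c))" by (simp add: linmap_def)
  then show ?thesis by (induct W rule: tensor_induct) (simp_all add: KL)
qed

lemma key_cols: "tmap (\<lambda>u. \<rho> (mul u r)) id (sig (\<rho> q)) = tmap (\<lambda>u. tmap (mul u) id (\<rho> r)) id (sig (\<rho> q))"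
proof -
  have "assocR (tmap \<rho> id (\<rho> q)) = tmap id \<Delta> (\<rho> q)" by (simp add: rho_coassoc)
  then show ?thesis by (simp add: k_a k_b KL2)
qed

lemma cols_in_B: "col j (sig (\<rho> q)) \<in> BB"
  unfolding coinv_def
proof (clarify)
  fix r
  show "\<rho> (mul (col j (sig (\<rho> q))) r) = tmap (mul (col j (sig (\<rho> q)))) id (\<rho> r)"
    using col_comm[OF lin_rhom[of r], of j "sig (\<rho> q)"] col_comm[OF lin_mrr[of r], of j "sig (\<rho> q)"]
      key_cols[of r q] by simp
qed

lemma bal_lemma:
  assumes "\<And>j. col j t \<in> BB"
  shows "tprod p (mulmap mul t) - tmap (mul p) id t \<in> NN"
proof -
  let ?J = "snd ` Poly_Mapping.keys t"
  have t: "t = (\<Sum>j\<in>?J. tprod (col j t) (bas j))" by (rule col_decomp)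
  have m: "mulmap mul t = (\<Sum>j\<in>?J. mul (col j t) (bas j))"
  proof -
    have "mulmap mul t = mulmap mul (\<Sum>j\<in>?J. tprod (col j t) (bas j))"
      by (rule arg_cong[where f="mulmap mul"], rule t)
    also have "\<dots> = (\<Sum>j\<in>?J. mul (col j t) (bas j))"
      by (simp only: linmap_sum[OF linmap_mulmap] mulmap_tp)
    finally show ?thesis .
  qed
  have n: "tmap (mul p) id t = (\<Sum>j\<in>?J. tprod (mul p (col j t)) (bas j))"
  proof -
    have "tmap (mul p) id t = tmap (mul p) id (\<Sum>j\<in>?J. tprod (col j t) (bas j))"
      by (rule arg_cong[where f="tmap (mul p) id"], rule t)
    also have "\<dots> = (\<Sum>j\<in>?J. tprod (mul p (col j t)) (bas j))"
      by (simp only: linmap_sum[OF linmap_tmap] tmap_tprod[OF lin_mul2 linmap_id(1)] id_apply)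
    finally show ?thesis .
  qed
  have "tprod p (mulmap mul t) - tmap (mul p) id t
      = (\<Sum>j\<in>?J. tprod p (mul (col j t) (bas j))) - (\<Sum>j\<in>?J. tprod (mul p (col j t)) (bas j))"
    by (simp only: m n linmap_sum[OF linmap_tprod2])
  also have "\<dots> = (\<Sum>j\<in>?J. tprod p (mul (col j t) (bas j)) - tprod (mul p (col j t)) (bas j))"
    by (rule sum_subtractf[symmetric])
  also have "\<dots> = (\<Sum>j\<in>?J. sc (-1) (tprod (mul p (col j t)) (bas j) - tprod p (mul (col j t) (bas j))))"
    by (rule sum.cong) (simp_all only: sc_uminus minus_diff_eq)
  also have "\<dots> \<in> NN"
  proof (rule subspace_sum[OF subN])
    fix j
    have "tprod (mul p (col j t)) (bas j) - tprod p (mul (col j t) (bas j)) \<in> NN"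
    proof -
      have g: "tprod (mul p (col j t)) (bas j) - tprod p (mul (col j t) (bas j)) \<in> {tprod (mul p b) q - tprod p (mul b q) | p q b. b \<in> BB}"
        by (rule CollectI, rule exI[of _ p], rule exI[of _ "bas j"], rule exI[of _ "col j t"]) (simp add: assms)
      show ?thesis unfolding balanced_def by (rule subsetD[OF kspan_sup g])
    qed
    then show "sc (-1) (tprod (mul p (col j t)) (bas j) - tprod p (mul (col j t) (bas j))) \<in> NN"
      using subN by (simp add: subspace_def)
  qed
  finally show ?thesis .
qed

lemma x_sig: "x - sig (canT x) \<in> NN"
proof (induct x rule: tensor_induct)
  case (tprod p q)
  have "tprod p (mulmap mul (sig (\<rho> q))) - tmap (mul p) id (sig (\<rho> q)) \<in> NN"
    by (rule bal_lemma) (rule cols_in_B)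
  then show ?case by (simp add: sig_left mulmap_sig)
next
  case (add x y)
  then have "(x - sig (canT x)) + (y - sig (canT y)) \<in> NN" using subN by (simp add: subspace_def)
  then show ?case by (simp add: algebra_simps)
next
  case (sc c x)
  then have "sc c (x - sig (canT x)) \<in> NN" using subN by (simp add: subspace_def)
  then show ?case by (simp add: sc_minus)
qed

lemma canB_bij: "bij_betw (canB mul \<rho>) TT UNIV"
proof (rule bij_betwI')
  fix X Y assume X: "X \<in> TT" and Y: "Y \<in> TT"
  obtain x where x: "X = (\<lambda>n. x + n) ` NN" using TT_elem[OF X] by blast
  obtain y where y: "Y = (\<lambda>n. y + n) ` NN" using TT_elem[OF Y] by blast
  show "(canB mul \<rho> X = canB mul \<rho> Y) = (X = Y)"
  proof
    assume "canB mul \<rho> X = canB mul \<rho> Y"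
    then have eq: "canT x = canT y" by (simp add: x y canB_coset)
    have "(x - sig (canT x)) - (y - sig (canT y)) \<in> NN"
      using x_sig x_sig subN subspace_minus by blast
    then have d: "x - y \<in> NN" by (simp add: eq)
    have d': "y - x \<in> NN" using subspace_minus[OF subN _ d, of 0] subN by (simp add: subspace_def)
    show "X = Y" unfolding x y
    proof (intro set_eqI iffI)
      fix z assume "z \<in> (\<lambda>n. x + n) ` NN"
      then obtain n where n: "n \<in> NN" "z = x + n" by blast
      have "(x - y) + n \<in> NN" using d n subN by (simp add: subspace_def)
      then show "z \<in> (\<lambda>n. y + n) ` NN" using n by (auto intro!: image_eqI[where x = "(x - y) + n"])
    next
      fix z assume "z \<in> (\<lambda>n. y + n) ` NN"
      then obtain n where n: "n \<in> NN" "z = y + n" by blast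
      have "(y - x) + n \<in> NN" using d' n subN by (simp add: subspace_def)
      then show "z \<in> (\<lambda>n. x + n) ` NN" using n by (auto intro!: image_eqI[where x = "(y - x) + n"])
    qed
  qed simp
next
  fix X assume "X \<in> TT" then show "canB mul \<rho> X \<in> UNIV" by simp
next
  fix w :: "('p \<times> 'c, 'k) vec"
  have "(\<lambda>n. sig w + n) ` NN \<in> TT" by (simp add: tensorB_def)
  moreover have "canB mul \<rho> ((\<lambda>n. sig w + n) ` NN) = w" by (simp add: canB_coset can_sig)
  ultimately show "\<exists>X\<in>TT. w = canB mul \<rho> X" by metis
qed

lemma lin_mr2 [simp]: "linmap (\<lambda>q. mul q r)" by simp
lemma lin_psir [simp]: "linmap (\<lambda>c. \<psi> (tprod c r))" by (simp add: linmap_def)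

definition Psir where "Psir r w = tmap (mulmap mul) id (assocL (tmap id (\<lambda>c. \<psi> (tprod c r)) w))"
lemma Psir_add [simp]: "Psir r (x + y) = Psir r x + Psir r y" by (simp add: Psir_def)
lemma Psir_sc [simp]: "Psir r (sc c x) = sc c (Psir r x)" by (simp add: Psir_def)
lemma Psir_tprod [simp]: "Psir r (tprod a c) = tmap (mul a) id (\<psi> (tprod c r))" by (simp add: Psir_def mulL)

lemma canR0: "tmap (mul y) id (Ent W r) = Psir r (tmap (mul y) id W)"
  by (induct W rule: tensor_induct) (simp_all add: comp_mul)
lemma canR: "canT (tmap id (\<lambda>q. mul q r) x) = Psir r (canT x)"
proof (induct x rule: tensor_induct)
  case (tprod u v)
  show ?case by (simp add: rho_mul canR0)
qed simp_all

lemma tmap_mul_one [simp]: "tmap (mul one) id Z = Z"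
  by (induct Z rule: tensor_induct) simp_all

lemma psican_eq: "psican mul one \<rho> = \<psi>"
proof
  fix x
  have g: "canT (tmap id (\<lambda>q. mul q (bas j)) (SOME x. x \<in> inv_into TT (canB mul \<rho>) (tprod one (bas i)))) = \<psi> (tprod (bas i) (bas j))" for i j
  proof -
    have "tprod one (bas i) \<in> canB mul \<rho> ` TT" using canB_bij by (simp add: bij_betw_def)
    then have "canB mul \<rho> (inv_into TT (canB mul \<rho>) (tprod one (bas i))) = tprod one (bas i)"
      by (rule f_inv_into_f)
    then have "canT (SOME x. x \<in> inv_into TT (canB mul \<rho>) (tprod one (bas i))) = tprod one (bas i)"
      by (simp add: canB_def)
    then show ?thesis by (simp add: canR)
  qed
  have "psican mul one \<rho> x = lext (\<lambda>k. \<psi> (bas k)) x"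
    unfolding psican_def
    by (rule arg_cong[where f = "\<lambda>g. lext g x"]) (auto simp: g simp del: bas_pair simp add: tprod_bas)
  also have "\<dots> = \<psi> x" by (rule linmap_expand) simp
  finally show "psican mul one \<rho> x = \<psi> x" .
qed

lemma Lam_eq: "(\<lambda>p. inv (psican mul one \<rho>) (tprod p e)) = Lam"
  by (simp add: psican_eq Lam_def[abs_def])

lemma main: "bij_betw (canB mul \<rho>) TT UNIV \<and> principal mul one \<Delta> \<rho> e"
  unfolding principal_def
proof (intro conjI canB_bij exI)
  show "bij (psican mul one \<rho>)" by (simp add: psican_eq bijpsi)
  show "strong_connection mul one \<Delta> \<rho> (psican mul one \<rho>) e ell"
    unfolding strong_connection_def Lam_eq
    by (simp add: ell_e ell_can ell_right ell_left)
qed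

end

theorem mainTheorem9:
  fixes mul :: "('p, 'k::field) vec \<Rightarrow> ('p, 'k) vec \<Rightarrow> ('p, 'k) vec"
    and one :: "('p, 'k) vec"
    and \<Delta> :: "('c, 'k) vec \<Rightarrow> ('c \<times> 'c, 'k) vec"
    and \<epsilon> :: "('c, 'k) vec \<Rightarrow> 'k"
    and \<psi> :: "('c \<times> 'p, 'k) vec \<Rightarrow> ('p \<times> 'c, 'k) vec"
    and \<rho> :: "('p, 'k) vec \<Rightarrow> ('p \<times> 'c, 'k) vec"
    and e :: "('c, 'k) vec"
    and \<tau> :: "('c, 'k) vec \<Rightarrow> ('p \<times> 'p, 'k) vec"
  assumes "algebra mul one"
    and "coalgebra \<Delta> \<epsilon>"
    and "coseparable \<Delta> \<epsilon>"
    and "entwining mul one \<Delta> \<epsilon> \<psi>"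
    and "entw_extension mul \<Delta> \<epsilon> \<psi> \<rho>"
    and "grouplike \<Delta> \<epsilon> e"
    and "copointed \<psi> \<rho> e"
    and "bij \<psi>"
    and "colifting mul one \<rho> \<tau>"
  shows "bij_betw (canB mul \<rho>) (tensorB mul (coinv mul \<rho>)) UNIV
    \<and> principal mul one \<Delta> \<rho> e"
  by (rule ctx.main[OF ctx.intro[OF assms]])

end
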